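(* For every monomial $\mathbf{y}^\alpha\in\mathbb{K}[\mathbf{y}]$, $\deg_{y_0}(\eta(\mathbf{y}^\alpha))=\deg(\mathbf{y}^\alpha)-\delta(\psi(\mathbf{y}^\alpha))$, where $\deg$ is the total degree and $\deg_{y_0}$ the degree in $y_0$.
   Context: Let $\mathbb{K}$ be a field of characteristic $0$, $M\subset\mathbb{R}^n$ a polytope with $0\in M$, $S_M\subset\mathbb{Z}^n$ the affine semigroup generated by $M\cap\mathbb{Z}^n$ and $S_M^h\subset\mathbb{Z}^{n+1}$ the one generated by $\{(s,1):s\in M\cap\mathbb{Z}^n\}$, both assumed pointed. $\mathbb{K}[S]$ is the semigroup algebra with monomials $X^s$, $X^sX^t=X^{s+t}$; $\mathbb{K}[S_M^h]$ is graded by $\deg X^{(s,d)}=d$. $\chi:\mathbb{K}[S_M^h]\to\mathbb{K}[S_M]$, $X^{(s,d)}\mapsto X^s$. The affine degree $\delta^A(X^s)$ is the least $d$ with $(s,d)\in S_M^h$; the sparse degree of a monomial $X^{(s,d)}$ is $\delta(X^{(s,d)})=\delta^A(X^s)$. Fix a monomial order $<_M$ on $\mathbb{K}[S_M]$. Let $a_0,\dots,a_m$ be the elements of $\{(s,1):s\in M\cap\mathbb{Z}^n\}$ with $a_0=(0,1)$; $\mathbb{K}[\mathbf{y}]=\mathbb{K}[y_0,\dots,y_m]$; $\psi:\mathbb{K}[\mathbf{y}]\to\mathbb{K}[S_M^h]$ the $\mathbb{K}$-algebra epimorphism $y_i\mapsto X^{a_i}$, with kernel the lattice ideal $T$. Fix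 a monomial order $\tilde<$ on $\mathbb{K}[\mathbf{y}]$ and define the monomial order $<_y$: $\mathbf{y}^a<_y\mathbf{y}^b$ iff $\deg\mathbf{y}^a<\deg\mathbf{y}^b$; or total degrees equal and $\deg_{y_0}\mathbf{y}^a>\deg_{y_0}\mathbf{y}^b$; or both equal and $\chi(\psi(\mathbf{y}^a))<_M\chi(\psi(\mathbf{y}^b))$; or all equal and $\mathbf{y}^a\,\tilde<\,\mathbf{y}^b$. For $g\in\mathbb{K}[\mathbf{y}]$, $\eta(g)$ denotes the normal form of $g$ with respect to $T$ and $<_y$ (for a monomial this normal form is a monomial). *)

theory Defs
  imports "HOL-Analysis.Analysis" "HOL-Library.Poly_Mapping"
begin

definition polytope :: "(real ^ 'n) set \<Rightarrow> bool" where
  "polytope M \<longleftrightarrow> (\<exists>P. finite P \<and> M = convex hull P)"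

definition latpts :: "(real ^ 'n) set \<Rightarrow> (int ^ 'n) set" where
  "latpts M = {s. (\<chi> i. real_of_int (s $ i)) \<in> M}"

inductive_set sgrp :: "'a::monoid_add set \<Rightarrow> 'a set" for G where
  zero: "0 \<in> sgrp G"
| add: "x \<in> sgrp G \<Longrightarrow> g \<in> G \<Longrightarrow> x + g \<in> sgrp G"

definition pointed :: "'a::ab_group_add set \<Rightarrow> bool" where
  "pointed S \<longleftrightarrow> (\<forall>s\<in>S. - s \<in> S \<longrightarrow> s = 0)"

definition S_M :: "(real ^ 'n) set \<Rightarrow> (int ^ 'n) set" where
  "S_M M = sgrp (latpts M)"

(* S_M^h \<subseteq> Z^{n+1} = Z^n \<times> Z, last coordinate = degree *)
definition S_Mh :: "(real ^ 'n) set \<Rightarrow> ((int ^ 'n) \<times> int) set" where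
  "S_Mh M = sgrp ((\<lambda>s. (s, 1)) ` latpts M)"

definition deltaA :: "(real ^ 'n) set \<Rightarrow> int ^ 'n \<Rightarrow> nat" where
  "deltaA M s = (LEAST d::nat. (s, int d) \<in> S_Mh M)"

definition monomial_order_on :: "'a::monoid_add set \<Rightarrow> ('a \<Rightarrow> 'a \<Rightarrow> bool) \<Rightarrow> bool" where
  "monomial_order_on S lt \<longleftrightarrow>
     (\<forall>x\<in>S. \<not> lt x x) \<and>
     (\<forall>x\<in>S. \<forall>y\<in>S. \<forall>z\<in>S. lt x y \<longrightarrow> lt y z \<longrightarrow> lt x z) \<and>
     (\<forall>x\<in>S. \<forall>y\<in>S. lt x y \<or> x = y \<or> lt y x) \<and>
     (\<forall>x\<in>S. \<forall>y\<in>S. \<forall>z\<in>S. lt x y \<longrightarrow> lt (x + z) (y + z)) \<and>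
     wf {(x, y). x \<in> S \<and> y \<in> S \<and> lt x y}"

(* Polynomial ring K[y_0,...,y_m]: exponent vectors nat \<Rightarrow>\<^sub>0 nat *)
definition ymons :: "nat \<Rightarrow> (nat \<Rightarrow>\<^sub>0 nat) set" where
  "ymons m = {\<alpha>. Poly_Mapping.keys \<alpha> \<subseteq> {..m}}"

definition Ry :: "nat \<Rightarrow> ((nat \<Rightarrow>\<^sub>0 nat) \<Rightarrow>\<^sub>0 'k::field) set" where
  "Ry m = {f. Poly_Mapping.keys f \<subseteq> ymons m}"

definition tdeg :: "(nat \<Rightarrow>\<^sub>0 nat) \<Rightarrow> nat" where
  "tdeg \<alpha> = (\<Sum>i\<in>Poly_Mapping.keys \<alpha>. Poly_Mapping.lookup \<alpha> i)"

definition deg_y0 :: "((nat \<Rightarrow>\<^sub>0 nat) \<Rightarrow>\<^sub>0 'k::zero) \<Rightarrow> nat" where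
  "deg_y0 f = Max (insert 0 ((\<lambda>\<beta>. Poly_Mapping.lookup \<beta> 0) ` Poly_Mapping.keys f))"

definition psi_exp :: "(nat \<Rightarrow> int ^ 'n) \<Rightarrow> (nat \<Rightarrow>\<^sub>0 nat) \<Rightarrow> (int ^ 'n) \<times> int" where
  "psi_exp a \<alpha> = ((\<Sum>i\<in>Poly_Mapping.keys \<alpha>. of_nat (Poly_Mapping.lookup \<alpha> i) *s a i), int (tdeg \<alpha>))"

definition chipsi :: "(nat \<Rightarrow> int ^ 'n) \<Rightarrow> (nat \<Rightarrow>\<^sub>0 nat) \<Rightarrow> int ^ 'n" where
  "chipsi a \<alpha> = fst (psi_exp a \<alpha>)"

(* psi : K[y] \<rightarrow> K[S_M^h], K-linear extension of y^alpha \<mapsto> X^(psi_exp alpha);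
   elements of K[S_M^h] represented as coefficient functions *)
definition psi :: "(nat \<Rightarrow> int ^ 'n) \<Rightarrow> ((nat \<Rightarrow>\<^sub>0 nat) \<Rightarrow>\<^sub>0 'k::field) \<Rightarrow> ((int ^ 'n) \<times> int \<Rightarrow> 'k)" where
  "psi a f = (\<lambda>u. \<Sum>\<alpha>\<in>{\<alpha>\<in>Poly_Mapping.keys f. psi_exp a \<alpha> = u}. Poly_Mapping.lookup f \<alpha>)"

definition Tker :: "nat \<Rightarrow> (nat \<Rightarrow> int ^ 'n) \<Rightarrow> ((nat \<Rightarrow>\<^sub>0 nat) \<Rightarrow>\<^sub>0 'k::field) set" where
  "Tker m a = {f \<in> Ry m. psi a f = (\<lambda>_. 0)}"

definition ordy :: "(int ^ 'n \<Rightarrow> int ^ 'n \<Rightarrow> bool) \<Rightarrow> ((nat \<Rightarrow>\<^sub>0 nat) \<Rightarrow> (nat \<Rightarrow>\<^sub>0 nat) \<Rightarrow> bool)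
   \<Rightarrow> (nat \<Rightarrow> int ^ 'n) \<Rightarrow> (nat \<Rightarrow>\<^sub>0 nat) \<Rightarrow> (nat \<Rightarrow>\<^sub>0 nat) \<Rightarrow> bool" where
  "ordy ltM ltt a \<alpha> \<beta> \<longleftrightarrow>
     tdeg \<alpha> < tdeg \<beta> \<or>
     (tdeg \<alpha> = tdeg \<beta> \<and>
       (Poly_Mapping.lookup \<alpha> 0 > Poly_Mapping.lookup \<beta> 0 \<or>
        (Poly_Mapping.lookup \<alpha> 0 = Poly_Mapping.lookup \<beta> 0 \<and>
          (ltM (chipsi a \<alpha>) (chipsi a \<beta>) \<or>
           (chipsi a \<alpha> = chipsi a \<beta> \<and> ltt \<alpha> \<beta>)))))"

definition lead_mon :: "((nat \<Rightarrow>\<^sub>0 nat) \<Rightarrow> (nat \<Rightarrow>\<^sub>0 nat) \<Rightarrow> bool) \<Rightarrow> ((nat \<Rightarrow>\<^sub>0 nat) \<Rightarrow>\<^sub>0 'k::zero) \<Rightarrow> nat \<Rightarrow>\<^sub>0 nat" where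
  "lead_mon lt f = (THE \<beta>. \<beta> \<in> Poly_Mapping.keys f \<and> (\<forall>\<gamma>\<in>Poly_Mapping.keys f. \<gamma> = \<beta> \<or> lt \<gamma> \<beta>))"

definition normal_form :: "((nat \<Rightarrow>\<^sub>0 nat) \<Rightarrow>\<^sub>0 'k::field) set \<Rightarrow> ((nat \<Rightarrow>\<^sub>0 nat) \<Rightarrow>\<^sub>0 'k) set
    \<Rightarrow> ((nat \<Rightarrow>\<^sub>0 nat) \<Rightarrow> (nat \<Rightarrow>\<^sub>0 nat) \<Rightarrow> bool) \<Rightarrow> ((nat \<Rightarrow>\<^sub>0 nat) \<Rightarrow>\<^sub>0 'k) \<Rightarrow> ((nat \<Rightarrow>\<^sub>0 nat) \<Rightarrow>\<^sub>0 'k)" where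
  "normal_form R I lt g = (THE r. r \<in> R \<and> g - r \<in> I \<and>
      (\<forall>\<beta>\<in>Poly_Mapping.keys r. \<beta> \<notin> {lead_mon lt f | f. f \<in> I \<and> f \<noteq> 0}))"

end

theory Submission
  imports Defs
begin


lemma sgrp_plus: "y \<in> sgrp G \<Longrightarrow> x \<in> sgrp G \<Longrightarrow> x + y \<in> sgrp G"
proof (induction y rule: sgrp.induct)
  case zero then show ?case by simp
next
  case (add y g) then show ?case by (metis add.assoc sgrp.add)
qed

lemma fst_S_Mh: "p \<in> S_Mh M \<Longrightarrow> fst p \<in> S_M M"
  unfolding S_Mh_def S_M_def
proof (induction p rule: sgrp.induct)
  case zero then show ?case by (simp add: sgrp.zero)
next
  case (add x g) then show ?case by (auto intro: sgrp.add)
qed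

lemma sum_keys_eq:
  fixes f :: "nat \<Rightarrow> nat \<Rightarrow> 'b::comm_monoid_add"
  assumes "Poly_Mapping.keys \<gamma> \<subseteq> A" "finite A" "\<And>i. f i 0 = 0"
  shows "(\<Sum>i\<in>Poly_Mapping.keys \<gamma>. f i (Poly_Mapping.lookup \<gamma> i)) = (\<Sum>i\<in>A. f i (Poly_Mapping.lookup \<gamma> i))"
  using assms by (intro sum.mono_neutral_left) (auto simp: in_keys_iff)

lemma psi_exp_alt:
  assumes "Poly_Mapping.keys \<gamma> \<subseteq> A" "finite A"
  shows "psi_exp a \<gamma> = ((\<Sum>i\<in>A. of_nat (Poly_Mapping.lookup \<gamma> i) *s a i), int (\<Sum>i\<in>A. Poly_Mapping.lookup \<gamma> i))"
proof -
  have 1: "(\<Sum>i\<in>Poly_Mapping.keys \<gamma>. of_nat (Poly_Mapping.lookup \<gamma> i) *s a i) = (\<Sum>i\<in>A. of_nat (Poly_Mapping.lookup \<gamma> i) *s a i)"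
    using sum_keys_eq[OF assms, of "\<lambda>i k. of_nat k *s a i"] by simp
  have 2: "tdeg \<gamma> = (\<Sum>i\<in>A. Poly_Mapping.lookup \<gamma> i)"
    unfolding tdeg_def using sum_keys_eq[OF assms, of "\<lambda>i k. k"] by simp
  show ?thesis unfolding psi_exp_def 1 2 ..
qed

lemma tdeg_alt:
  assumes "Poly_Mapping.keys \<gamma> \<subseteq> A" "finite A"
  shows "tdeg \<gamma> = (\<Sum>i\<in>A. Poly_Mapping.lookup \<gamma> i)"
    unfolding tdeg_def using sum_keys_eq[OF assms, of "\<lambda>i k. k"] by simp

lemma psi_exp_add:
  assumes "\<gamma> \<in> ymons m" "\<delta> \<in> ymons m"
  shows "psi_exp a (\<gamma> + \<delta>) = psi_exp a \<gamma> + psi_exp a \<delta>"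
proof -
  have k: "Poly_Mapping.keys (\<gamma> + \<delta>) \<subseteq> {..m}" using assms keys_add[of \<gamma> \<delta>] unfolding ymons_def by auto
  show ?thesis
    using assms unfolding psi_exp_alt[OF k finite_atMost] ymons_def
    by (simp add: psi_exp_alt[of _ "{..m}"] lookup_add sum.distrib vector_sadd_rdistrib)
qed

lemma tdeg_add:
  assumes "\<gamma> \<in> ymons m" "\<delta> \<in> ymons m"
  shows "tdeg (\<gamma> + \<delta>) = tdeg \<gamma> + tdeg \<delta>"
proof -
  have k: "Poly_Mapping.keys (\<gamma> + \<delta>) \<subseteq> {..m}" using assms keys_add[of \<gamma> \<delta>] unfolding ymons_def by auto
  show ?thesis
    using assms unfolding tdeg_alt[OF k finite_atMost] ymons_def
    by (simp add: tdeg_alt[of _ "{..m}"] lookup_add sum.distrib)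
qed

lemma psi_exp_single: "psi_exp a (Poly_Mapping.single i k) = (of_nat k *s a i, int k)"
  unfolding psi_exp_def tdeg_def by auto

lemma ymons_add: "\<gamma> \<in> ymons m \<Longrightarrow> \<delta> \<in> ymons m \<Longrightarrow> \<gamma> + \<delta> \<in> ymons m"
  using keys_add[of \<gamma> \<delta>] unfolding ymons_def by auto

lemma ymons_single: "i \<le> m \<Longrightarrow> Poly_Mapping.single i k \<in> ymons m"
  unfolding ymons_def by auto

lemma ymons_induct_aux:
  assumes "finite A" "A \<subseteq> {..m}" "P 0"
    and step: "\<And>\<gamma> i k. \<gamma> \<in> ymons m \<Longrightarrow> i \<le> m \<Longrightarrow> P \<gamma> \<Longrightarrow> P (\<gamma> + Poly_Mapping.single i k)"
  shows "Poly_Mapping.keys \<gamma> \<subseteq> A \<Longrightarrow> P \<gamma>"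
  using assms(1,2)
proof (induction A arbitrary: \<gamma> rule: finite_induct)
  case empty then show ?case using assms(3) by simp
next
  case (insert i A)
  define \<gamma>' where "\<gamma>' = \<gamma> - Poly_Mapping.single i (Poly_Mapping.lookup \<gamma> i)"
  have eq: "\<gamma> = \<gamma>' + Poly_Mapping.single i (Poly_Mapping.lookup \<gamma> i)"
    unfolding \<gamma>'_def by (rule poly_mapping_eqI) (simp add: lookup_add lookup_minus lookup_single when_def)
  have z: "\<And>x. x \<notin> insert i A \<Longrightarrow> Poly_Mapping.lookup \<gamma> x = 0"
    using insert.prems by (metis in_keys_iff subsetD)
  have k: "Poly_Mapping.keys \<gamma>' \<subseteq> A"
  proof
    fix x assume "x \<in> Poly_Mapping.keys \<gamma>'"
    then have "Poly_Mapping.lookup \<gamma>' x \<noteq> 0" by (simp add: in_keys_iff)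
    then have "x \<noteq> i" "Poly_Mapping.lookup \<gamma> x \<noteq> 0" unfolding \<gamma>'_def
      by (auto simp: lookup_minus lookup_single when_def split: if_splits)
    then show "x \<in> A" using z[of x] by auto
  qed
  have Am: "A \<subseteq> {..m}" and im: "i \<le> m" using insert.prems by auto
  have P': "P \<gamma>'" using insert.IH k Am by simp
  have Y': "\<gamma>' \<in> ymons m" using k Am unfolding ymons_def by auto
  show ?case by (subst eq) (rule step[OF Y' im P'])
qed

lemma ymons_induct:
  assumes "\<gamma> \<in> ymons m" "P 0"
    and "\<And>\<gamma> i k. \<gamma> \<in> ymons m \<Longrightarrow> i \<le> m \<Longrightarrow> P \<gamma> \<Longrightarrow> P (\<gamma> + Poly_Mapping.single i k)"
  shows "P \<gamma>"
  using ymons_induct_aux[of "{..m}" m P \<gamma>] assms unfolding ymons_def by auto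

lemma psi_exp_zero: "psi_exp a 0 = 0"
  unfolding psi_exp_def tdeg_def by (simp add: prod_eq_iff)

lemma psi_single_S_Mh:
  assumes "a i \<in> latpts M"
  shows "psi_exp a (Poly_Mapping.single i k) \<in> S_Mh M"
proof (induction k)
  case 0 then show ?case by (metis psi_exp_zero single_zero S_Mh_def sgrp.zero)
next
  case (Suc k)
  have "psi_exp a (Poly_Mapping.single i (Suc k)) = psi_exp a (Poly_Mapping.single i k) + (a i, 1)"
    by (simp add: psi_exp_single vector_sadd_rdistrib)
  then show ?case using Suc assms unfolding S_Mh_def by (auto intro: sgrp.add)
qed

lemma psi_S_Mh:
  assumes "\<gamma> \<in> ymons m" "\<forall>i\<le>m. a i \<in> latpts M"
  shows "psi_exp a \<gamma> \<in> S_Mh M"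
proof (rule ymons_induct[OF assms(1)])
  show "psi_exp a 0 \<in> S_Mh M" by (metis psi_exp_zero S_Mh_def sgrp.zero)
next
  fix \<gamma> i k assume h: "\<gamma> \<in> ymons m" "i \<le> m" "psi_exp a \<gamma> \<in> S_Mh M"
  then show "psi_exp a (\<gamma> + Poly_Mapping.single i k) \<in> S_Mh M" using psi_exp_add[OF h(1) ymons_single[OF h(2)]] psi_single_S_Mh[of a i M k] assms(2)
    unfolding S_Mh_def by (metis sgrp_plus)
qed

lemma S_Mh_psi:
  assumes "p \<in> S_Mh M" "latpts M \<subseteq> a ` {..m}"
  shows "\<exists>\<gamma>\<in>ymons m. psi_exp a \<gamma> = p"
  using assms(1) unfolding S_Mh_def
proof (induction p rule: sgrp.induct)
  case zero then show ?case by (intro bexI[of _ 0]) (auto simp: psi_exp_zero ymons_def)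
next
  case (add x g)
  then obtain \<gamma> where g: "\<gamma> \<in> ymons m" "psi_exp a \<gamma> = x" by auto
  from add obtain s where s: "s \<in> latpts M" "g = (s, 1)" by auto
  then obtain i where i: "i \<le> m" "a i = s" using assms(2) by auto
  have "psi_exp a (Poly_Mapping.single i 1) = g" using s i by (simp add: psi_exp_single)
  moreover have "psi_exp a (\<gamma> + Poly_Mapping.single i 1) = psi_exp a \<gamma> + psi_exp a (Poly_Mapping.single i 1)"
    by (rule psi_exp_add[OF g(1) ymons_single[OF i(1)]])
  ultimately have "psi_exp a (\<gamma> + Poly_Mapping.single i 1) = x + g" using g(2) by simp
  then show ?case using ymons_add[OF g(1) ymons_single[OF i(1)]] by blast
qed

lemma max_exists:
  assumes irr: "\<forall>x\<in>S. \<not> R x x"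
    and tr: "\<forall>x\<in>S. \<forall>y\<in>S. \<forall>z\<in>S. R x y \<longrightarrow> R y z \<longrightarrow> R x z"
    and tot: "\<forall>x\<in>S. \<forall>y\<in>S. R x y \<or> x = y \<or> R y x"
    and F: "finite F" "F \<noteq> {}" "F \<subseteq> S"
  shows "\<exists>b\<in>F. \<forall>g\<in>F. g = b \<or> R g b"
  using F
proof (induction F rule: finite_ne_induct)
  case (singleton x) then show ?case by auto
next
  case (insert x F)
  then obtain b where b: "b \<in> F" "\<forall>g\<in>F. g = b \<or> R g b" by auto
  have xS: "x \<in> S" and bS: "b \<in> S" using insert b by auto
  show ?case
  proof (cases "R x b")
    case True then show ?thesis using b by auto
  next
    case False
    then have "R b x" using tot xS bS b insert by auto
    then show ?thesis using b tr xS bS insert by (metis insert_iff subsetD)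
  qed
qed

lemma the_max:
  assumes irr: "\<forall>x\<in>S. \<not> R x x"
    and tr: "\<forall>x\<in>S. \<forall>y\<in>S. \<forall>z\<in>S. R x y \<longrightarrow> R y z \<longrightarrow> R x z"
    and tot: "\<forall>x\<in>S. \<forall>y\<in>S. R x y \<or> x = y \<or> R y x"
    and F: "finite F" "F \<noteq> {}" "F \<subseteq> S"
  shows "(THE b. b \<in> F \<and> (\<forall>g\<in>F. g = b \<or> R g b)) \<in> F \<and>
         (\<forall>g\<in>F. g = (THE b. b \<in> F \<and> (\<forall>g\<in>F. g = b \<or> R g b)) \<or> R g (THE b. b \<in> F \<and> (\<forall>g\<in>F. g = b \<or> R g b)))"
proof (rule theI')
  obtain b where b: "b \<in> F" "\<forall>g\<in>F. g = b \<or> R g b" using max_exists[OF assms] by blast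
  show "\<exists>!b. b \<in> F \<and> (\<forall>g\<in>F. g = b \<or> R g b)"
  proof (rule ex1I[of _ b])
    show "b \<in> F \<and> (\<forall>g\<in>F. g = b \<or> R g b)" using b by auto
  next
    fix c assume c: "c \<in> F \<and> (\<forall>g\<in>F. g = c \<or> R g c)"
    show "c = b"
    proof (rule ccontr)
      assume "c \<noteq> b"
      then have "R c b" "R b c" using b c by auto
      then show False using irr tr b c F by (meson subsetD)
    qed
  qed
qed

lemma psi_alt:
  assumes "finite K" "Poly_Mapping.keys f \<subseteq> K"
  shows "psi a f u = (\<Sum>\<gamma>\<in>K. if psi_exp a \<gamma> = u then Poly_Mapping.lookup f \<gamma> else 0)"
proof -
  have "psi a f u = (\<Sum>\<gamma>\<in>Poly_Mapping.keys f. if psi_exp a \<gamma> = u then Poly_Mapping.lookup f \<gamma> else 0)"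
    unfolding psi_def by (rule sum.inter_filter) simp
  also have "\<dots> = (\<Sum>\<gamma>\<in>K. if psi_exp a \<gamma> = u then Poly_Mapping.lookup f \<gamma> else 0)"
    using assms by (intro sum.mono_neutral_left) (auto simp: in_keys_iff)
  finally show ?thesis .
qed

lemma psi_diff: "psi a (f - g) u = psi a f u - psi a g u"
proof -
  let ?K = "Poly_Mapping.keys f \<union> Poly_Mapping.keys g"
  have "psi a (f - g) u = (\<Sum>\<gamma>\<in>?K. if psi_exp a \<gamma> = u then Poly_Mapping.lookup (f - g) \<gamma> else 0)"
    by (rule psi_alt) (use keys_diff[of f g] in auto)
  also have "\<dots> = (\<Sum>\<gamma>\<in>?K. (if psi_exp a \<gamma> = u then Poly_Mapping.lookup f \<gamma> else 0) - (if psi_exp a \<gamma> = u then Poly_Mapping.lookup g \<gamma> else 0))"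
    by (intro sum.cong) (auto simp: lookup_minus)
  also have "\<dots> = psi a f u - psi a g u"
    by (simp add: sum_subtractf psi_alt[of ?K])
  finally show ?thesis .
qed

lemma Tker_mem: "f \<in> Tker m a \<longleftrightarrow> Poly_Mapping.keys f \<subseteq> ymons m \<and> psi a f = (\<lambda>_. 0)"
  unfolding Tker_def Ry_def by (simp only: mem_Collect_eq)

lemma Tker_diff:
  assumes f: "f \<in> Tker m a" and g: "g \<in> Tker m a"
  shows "f - g \<in> Tker m a"
proof -
  have fk: "Poly_Mapping.keys f \<subseteq> ymons m" and fp: "psi a f = (\<lambda>_. 0)" using f unfolding Tker_mem by auto
  have gk: "Poly_Mapping.keys g \<subseteq> ymons m" and gp: "psi a g = (\<lambda>_. 0)" using g unfolding Tker_mem by auto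
  have "Poly_Mapping.keys (f - g) \<subseteq> ymons m"
    using keys_diff[of f g] fk gk by blast
  moreover have "psi a (f - g) = (\<lambda>_. 0)"
  proof
    fix u show "psi a (f - g) u = 0" unfolding psi_diff fp gp by simp
  qed
  ultimately show ?thesis unfolding Tker_mem by blast
qed

lemma lex_trans:
  fixes t1 t2 t3 u1 u2 u3 :: nat
  assumes "t1 < t2 \<or> (t1 = t2 \<and> (u1 > u2 \<or> (u1 = u2 \<and> (L c1 c2 \<or> (c1 = c2 \<and> T x y)))))"
    and "t2 < t3 \<or> (t2 = t3 \<and> (u2 > u3 \<or> (u2 = u3 \<and> (L c2 c3 \<or> (c2 = c3 \<and> T y z)))))"
    and "L c1 c2 \<Longrightarrow> L c2 c3 \<Longrightarrow> L c1 c3" and "T x y \<Longrightarrow> T y z \<Longrightarrow> T x z"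
  shows "t1 < t3 \<or> (t1 = t3 \<and> (u1 > u3 \<or> (u1 = u3 \<and> (L c1 c3 \<or> (c1 = c3 \<and> T x z)))))"
  using assms by (elim disjE conjE; simp)
lemma lex_tot:
  fixes t1 t2 u1 u2 :: nat
  assumes "L c1 c2 \<or> c1 = c2 \<or> L c2 c1" and "T x y \<or> x = y \<or> T y x"
  shows "(t1 < t2 \<or> (t1 = t2 \<and> (u1 > u2 \<or> (u1 = u2 \<and> (L c1 c2 \<or> (c1 = c2 \<and> T x y)))))) \<or> x = y \<or>
         (t2 < t1 \<or> (t2 = t1 \<and> (u2 > u1 \<or> (u2 = u1 \<and> (L c2 c1 \<or> (c2 = c1 \<and> T y x))))))"
  using assms by auto

lemma ordy_props:
  assumes hM: "monomial_order_on (S_M M) ltM"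
    and ht: "monomial_order_on (ymons m) ltt"
    and ha: "\<forall>i\<le>m. a i \<in> latpts M"
  shows "\<forall>x\<in>ymons m. \<not> ordy ltM ltt a x x"
    and "\<forall>x\<in>ymons m. \<forall>y\<in>ymons m. \<forall>z\<in>ymons m. ordy ltM ltt a x y \<longrightarrow> ordy ltM ltt a y z \<longrightarrow> ordy ltM ltt a x z"
    and "\<forall>x\<in>ymons m. \<forall>y\<in>ymons m. ordy ltM ltt a x y \<or> x = y \<or> ordy ltM ltt a y x"
proof -
  have cS: "chipsi a x \<in> S_M M" if "x \<in> ymons m" for x
    unfolding chipsi_def by (rule fst_S_Mh[OF psi_S_Mh[OF that ha]])
  have irrM: "\<forall>x\<in>S_M M. \<not> ltM x x"
    using hM[unfolded monomial_order_on_def, THEN conjunct1] .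
  have trM: "\<forall>x\<in>S_M M. \<forall>y\<in>S_M M. \<forall>z\<in>S_M M. ltM x y \<longrightarrow> ltM y z \<longrightarrow> ltM x z"
    using hM[unfolded monomial_order_on_def, THEN conjunct2[THEN conjunct1]] .
  have totM: "\<forall>x\<in>S_M M. \<forall>y\<in>S_M M. ltM x y \<or> x = y \<or> ltM y x"
    using hM[unfolded monomial_order_on_def, THEN conjunct2[THEN conjunct2, THEN conjunct1]] .
  have irrT: "\<forall>x\<in>ymons m. \<not> ltt x x"
    using ht[unfolded monomial_order_on_def, THEN conjunct1] .
  have trT: "\<forall>x\<in>ymons m. \<forall>y\<in>ymons m. \<forall>z\<in>ymons m. ltt x y \<longrightarrow> ltt y z \<longrightarrow> ltt x z"
    using ht[unfolded monomial_order_on_def, THEN conjunct2[THEN conjunct1]] .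
  have totT: "\<forall>x\<in>ymons m. \<forall>y\<in>ymons m. ltt x y \<or> x = y \<or> ltt y x"
    using ht[unfolded monomial_order_on_def, THEN conjunct2[THEN conjunct2, THEN conjunct1]] .
  show "\<forall>x\<in>ymons m. \<not> ordy ltM ltt a x x"
  proof
    fix x assume x: "x \<in> ymons m"
    have "\<not> ltM (chipsi a x) (chipsi a x)" using irrM cS[OF x] by blast
    moreover have "\<not> ltt x x" using irrT x by blast
    ultimately show "\<not> ordy ltM ltt a x x" unfolding ordy_def by simp
  qed
  show "\<forall>x\<in>ymons m. \<forall>y\<in>ymons m. \<forall>z\<in>ymons m. ordy ltM ltt a x y \<longrightarrow> ordy ltM ltt a y z \<longrightarrow> ordy ltM ltt a x z"
  proof (intro ballI impI)
    fix x y z assume xyz: "x \<in> ymons m" "y \<in> ymons m" "z \<in> ymons m"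
      and o1: "ordy ltM ltt a x y" and o2: "ordy ltM ltt a y z"
    have t1: "ltM (chipsi a x) (chipsi a y) \<Longrightarrow> ltM (chipsi a y) (chipsi a z) \<Longrightarrow> ltM (chipsi a x) (chipsi a z)"
      using trM cS[OF xyz(1)] cS[OF xyz(2)] cS[OF xyz(3)] by blast
    have t2: "ltt x y \<Longrightarrow> ltt y z \<Longrightarrow> ltt x z" using trT xyz by blast
    show "ordy ltM ltt a x z" unfolding ordy_def by (rule lex_trans[OF o1[unfolded ordy_def] o2[unfolded ordy_def] t1 t2])
  qed
  show "\<forall>x\<in>ymons m. \<forall>y\<in>ymons m. ordy ltM ltt a x y \<or> x = y \<or> ordy ltM ltt a y x"
  proof (intro ballI)
    fix x y assume xy: "x \<in> ymons m" "y \<in> ymons m"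
    have t1: "ltM (chipsi a x) (chipsi a y) \<or> chipsi a x = chipsi a y \<or> ltM (chipsi a y) (chipsi a x)"
      using totM cS[OF xy(1)] cS[OF xy(2)] by blast
    have t2: "ltt x y \<or> x = y \<or> ltt y x" using totT xy by blast
    show "ordy ltM ltt a x y \<or> x = y \<or> ordy ltM ltt a y x" unfolding ordy_def by (rule lex_tot[OF t1 t2])
  qed
qed

lemma lookup0_le_tdeg: "\<gamma> \<in> ymons m \<Longrightarrow> Poly_Mapping.lookup \<gamma> 0 \<le> tdeg \<gamma>"
  unfolding ymons_def by (simp add: tdeg_alt[of _ "{..m}"] member_le_sum)

lemma split0:
  fixes \<gamma> :: "nat \<Rightarrow>\<^sub>0 nat"
  shows "\<gamma> = (\<gamma> - Poly_Mapping.single i (Poly_Mapping.lookup \<gamma> i)) + Poly_Mapping.single i (Poly_Mapping.lookup \<gamma> i)"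
  by (rule poly_mapping_eqI) (simp add: lookup_add lookup_minus lookup_single when_def)

lemma ymons_minus:
  fixes \<gamma> :: "nat \<Rightarrow>\<^sub>0 nat"
  assumes "\<gamma> \<in> ymons m" shows "\<gamma> - \<delta> \<in> ymons m"
proof -
  have h: "Poly_Mapping.keys \<gamma> \<subseteq> {..m}" using assms unfolding ymons_def by simp
  have "Poly_Mapping.keys (\<gamma> - \<delta>) \<subseteq> Poly_Mapping.keys \<gamma>"
  proof
    fix x assume "x \<in> Poly_Mapping.keys (\<gamma> - \<delta>)"
    then have "Poly_Mapping.lookup \<gamma> x \<noteq> 0" by (auto simp: in_keys_iff lookup_minus)
    then show "x \<in> Poly_Mapping.keys \<gamma>" by (simp add: in_keys_iff)
  qed
  then show ?thesis using h unfolding ymons_def by auto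
qed

theorem mainTheorem3:
  fixes M :: "(real ^ 'n) set"
    and m :: nat
    and a :: "nat \<Rightarrow> int ^ 'n"
    and ltM :: "int ^ 'n \<Rightarrow> int ^ 'n \<Rightarrow> bool"
    and ltt :: "(nat \<Rightarrow>\<^sub>0 nat) \<Rightarrow> (nat \<Rightarrow>\<^sub>0 nat) \<Rightarrow> bool"
    and \<alpha> :: "nat \<Rightarrow>\<^sub>0 nat"
  assumes "polytope M"
    and "0 \<in> M"
    and "pointed (S_M M)"
    and "pointed (S_Mh M)"
    and "bij_betw a {..m} (latpts M)"
    and "a 0 = 0"
    and "monomial_order_on (S_M M) ltM"
    and "monomial_order_on (ymons m) ltt"
    and "\<alpha> \<in> ymons m"
  shows "int (deg_y0 (normal_form (Ry m) (Tker m a :: ((nat \<Rightarrow>\<^sub>0 nat) \<Rightarrow>\<^sub>0 'k::field_char_0) set)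
                (ordy ltM ltt a) (Poly_Mapping.single \<alpha> 1)))
         = int (tdeg \<alpha>) - int (deltaA M (fst (psi_exp a \<alpha>)))"
proof -
  have ha: "\<forall>i\<le>m. a i \<in> latpts M" using assms(5) unfolding bij_betw_def by auto
  have hsurj: "latpts M \<subseteq> a ` {..m}" using assms(5) unfolding bij_betw_def by auto
  note op = ordy_props[OF assms(7,8) ha]
  let ?R = "ordy ltM ltt a"
  let ?T = "Tker m a :: ((nat \<Rightarrow>\<^sub>0 nat) \<Rightarrow>\<^sub>0 'k) set"
  define s where "s = fst (psi_exp a \<alpha>)"
  define d where "d = tdeg \<alpha>"
  have pa: "psi_exp a \<alpha> = (s, int d)" unfolding s_def d_def psi_exp_def by simp
  define C where "C = {\<gamma> \<in> ymons m. psi_exp a \<gamma> = psi_exp a \<alpha>}"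
  have Ctdeg: "tdeg \<gamma> = d" if "\<gamma> \<in> C" for \<gamma>
    using that unfolding C_def pa by (simp add: psi_exp_def)
  define L where "L = (\<lambda>\<gamma>. Poly_Mapping.lookup \<gamma> 0) ` C"
  have Lfin: "finite L"
  proof (rule finite_subset[of _ "{..d}"])
    show "L \<subseteq> {..d}" unfolding L_def using Ctdeg lookup0_le_tdeg unfolding C_def by fastforce
  qed simp
  have aC: "\<alpha> \<in> C" unfolding C_def using assms(9) by simp
  define b0 where "b0 = Max L"
  have b0L: "b0 \<in> L" unfolding b0_def using Lfin aC L_def by (intro Max_in) auto
  have b0ge: "Poly_Mapping.lookup \<gamma> 0 \<le> b0" if "\<gamma> \<in> C" for \<gamma>
    unfolding b0_def L_def using Lfin that L_def by (intro Max_ge) auto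
  define C' where "C' = {\<gamma> \<in> C. Poly_Mapping.lookup \<gamma> 0 = b0}"
  obtain \<gamma>0 where "\<gamma>0 \<in> C'" using b0L unfolding C'_def L_def by auto
  have wf: "wf {(x, y). x \<in> ymons m \<and> y \<in> ymons m \<and> ltt x y}"
    using assms(8)[unfolded monomial_order_on_def, THEN conjunct2, THEN conjunct2, THEN conjunct2, THEN conjunct2] .
  obtain \<beta> where \<beta>C': "\<beta> \<in> C'" and \<beta>min: "\<And>y. (y, \<beta>) \<in> {(x, y). x \<in> ymons m \<and> y \<in> ymons m \<and> ltt x y} \<Longrightarrow> y \<notin> C'"
    using wfE_min[OF wf \<open>\<gamma>0 \<in> C'\<close>] by blast
  have \<beta>C: "\<beta> \<in> C" and \<beta>0: "Poly_Mapping.lookup \<beta> 0 = b0" using \<beta>C' unfolding C'_def by auto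
  have \<beta>Y: "\<beta> \<in> ymons m" using \<beta>C unfolding C_def by auto
  have notless: "\<not> ?R \<gamma> \<beta>" if "\<gamma> \<in> C" for \<gamma>
  proof
    assume r: "?R \<gamma> \<beta>"
    have gY: "\<gamma> \<in> ymons m" using that unfolding C_def by auto
    have ch: "chipsi a \<gamma> = chipsi a \<beta>" using that \<beta>C unfolding C_def chipsi_def by simp
    have "\<not> ?R \<beta> \<beta>" using op(1) \<beta>Y by blast
    then have nM: "\<not> ltM (chipsi a \<beta>) (chipsi a \<beta>)" unfolding ordy_def by auto
    have "tdeg \<gamma> = tdeg \<beta>" using Ctdeg that \<beta>C by auto
    moreover have "Poly_Mapping.lookup \<gamma> 0 \<le> Poly_Mapping.lookup \<beta> 0" using b0ge that \<beta>0 by auto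
    ultimately have "Poly_Mapping.lookup \<gamma> 0 = b0" and lt: "ltt \<gamma> \<beta>"
      using r nM ch \<beta>0 unfolding ordy_def by auto
    then have "\<gamma> \<in> C'" using that unfolding C'_def by auto
    then show False using \<beta>min[of \<gamma>] lt gY \<beta>Y by auto
  qed
  have lm: "lead_mon ?R f \<in> Poly_Mapping.keys f \<and> (\<forall>g\<in>Poly_Mapping.keys f. g = lead_mon ?R f \<or> ?R g (lead_mon ?R f))"
    if "f \<in> ?T" "f \<noteq> 0" for f
  proof -
    have "Poly_Mapping.keys f \<subseteq> ymons m" using that unfolding Tker_def Ry_def by auto
    then show ?thesis unfolding lead_mon_def using the_max[OF op] that by simp
  qed
  have not_lead: "lead_mon ?R f \<noteq> \<beta>" if "f \<in> ?T" "f \<noteq> 0" for f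
  proof
    assume eq: "lead_mon ?R f = \<beta>"
    have kY: "Poly_Mapping.keys f \<subseteq> ymons m" using that unfolding Tker_def Ry_def by auto
    have bk: "\<beta> \<in> Poly_Mapping.keys f" and oth: "\<forall>g\<in>Poly_Mapping.keys f. g = \<beta> \<or> ?R g \<beta>"
      using lm[OF that] eq by auto
    have "{\<gamma> \<in> Poly_Mapping.keys f. psi_exp a \<gamma> = psi_exp a \<beta>} = {\<beta>}"
    proof (rule ccontr)
      assume "{\<gamma> \<in> Poly_Mapping.keys f. psi_exp a \<gamma> = psi_exp a \<beta>} \<noteq> {\<beta>}"
      then obtain \<gamma> where g: "\<gamma> \<in> Poly_Mapping.keys f" "psi_exp a \<gamma> = psi_exp a \<beta>" "\<gamma> \<noteq> \<beta>" using bk by auto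
      then have "\<gamma> \<in> C" using kY \<beta>C unfolding C_def by auto
      then show False using notless oth g by auto
    qed
    moreover have "psi a f (psi_exp a \<beta>) = 0" using that(1) unfolding Tker_def by auto
    ultimately have "Poly_Mapping.lookup f \<beta> = 0" unfolding psi_def by simp
    then show False using bk by (simp add: in_keys_iff)
  qed
  define r :: "(nat \<Rightarrow>\<^sub>0 nat) \<Rightarrow>\<^sub>0 'k" where "r = Poly_Mapping.single \<beta> 1"
  have r1: "r \<in> Ry m" unfolding r_def Ry_def using \<beta>Y by auto
  have r2: "Poly_Mapping.single \<alpha> 1 - r \<in> ?T"
  proof -
    have pe: "psi_exp a \<beta> = psi_exp a \<alpha>" using \<beta>C unfolding C_def by auto
    have k: "Poly_Mapping.keys (Poly_Mapping.single \<alpha> 1 - r) \<subseteq> {\<alpha>, \<beta>}"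
      using keys_diff[of "Poly_Mapping.single \<alpha> (1::'k)" r] unfolding r_def by auto
    have "psi a (Poly_Mapping.single \<alpha> 1 - r) u = 0" for u
    proof (cases "\<alpha> = \<beta>")
      case True then show ?thesis unfolding r_def psi_def by simp
    next
      case False
      have "psi a (Poly_Mapping.single \<alpha> 1 - r) u = (\<Sum>\<gamma>\<in>{\<alpha>, \<beta>}. if psi_exp a \<gamma> = u then Poly_Mapping.lookup (Poly_Mapping.single \<alpha> 1 - r) \<gamma> else 0)"
        by (rule psi_alt[OF _ k]) simp
      also have "\<dots> = 0" using False pe unfolding r_def
        by (simp add: lookup_minus lookup_single when_def)
      finally show ?thesis .
    qed
    moreover have "Poly_Mapping.single \<alpha> 1 - r \<in> Ry m" using k assms(9) \<beta>Y unfolding Ry_def by auto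
    ultimately show ?thesis unfolding Tker_def by auto
  qed
  have r3: "\<forall>\<mu>\<in>Poly_Mapping.keys r. \<mu> \<notin> {lead_mon ?R f | f. f \<in> ?T \<and> f \<noteq> 0}"
    unfolding r_def using not_lead by auto
  have nf: "normal_form (Ry m) ?T ?R (Poly_Mapping.single \<alpha> 1) = r"
    unfolding normal_form_def
  proof (rule the_equality)
    show "r \<in> Ry m \<and> Poly_Mapping.single \<alpha> 1 - r \<in> ?T \<and> (\<forall>\<mu>\<in>Poly_Mapping.keys r. \<mu> \<notin> {lead_mon ?R f | f. f \<in> ?T \<and> f \<noteq> 0})"
      using r1 r2 r3 by auto
  next
    fix r' assume h: "r' \<in> Ry m \<and> Poly_Mapping.single \<alpha> 1 - r' \<in> ?T \<and> (\<forall>\<mu>\<in>Poly_Mapping.keys r'. \<mu> \<notin> {lead_mon ?R f | f. f \<in> ?T \<and> f \<noteq> 0})"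
    have hT: "r' - r \<in> ?T" using Tker_diff[OF r2, of "Poly_Mapping.single \<alpha> 1 - r'"] h by (simp add: algebra_simps)
    show "r' = r"
    proof (rule ccontr)
      assume ne: "r' \<noteq> r"
      then have nz: "r' - r \<noteq> 0" by simp
      have "lead_mon ?R (r' - r) \<in> Poly_Mapping.keys (r' - r)" using lm[OF hT nz] by auto
      then have "lead_mon ?R (r' - r) \<in> Poly_Mapping.keys r' \<or> lead_mon ?R (r' - r) = \<beta>"
        using keys_diff[of r' r] unfolding r_def by auto
      then show False using h hT nz not_lead by blast
    qed
  qed
  have dy: "deg_y0 r = b0" unfolding r_def deg_y0_def using \<beta>0 by simp
  define \<delta> where "\<delta> = deltaA M s"
  have sd: "(s, int d) \<in> S_Mh M" using psi_S_Mh[OF assms(9) ha] pa by simp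
  have \<delta>in: "(s, int \<delta>) \<in> S_Mh M" unfolding \<delta>_def deltaA_def using sd by (rule LeastI)
  have \<delta>le: "\<delta> \<le> d" unfolding \<delta>_def deltaA_def using sd by (rule Least_le)
  obtain \<gamma> where \<gamma>: "\<gamma> \<in> ymons m" "psi_exp a \<gamma> = (s, int \<delta>)" using S_Mh_psi[OF \<delta>in hsurj] by auto
  have g2Y: "\<gamma> + Poly_Mapping.single 0 (d - \<delta>) \<in> ymons m" using ymons_add[OF \<gamma>(1) ymons_single] by auto
  have "psi_exp a (\<gamma> + Poly_Mapping.single 0 (d - \<delta>)) = (s, int d)"
    using psi_exp_add[OF \<gamma>(1) ymons_single[of 0 m], where a=a] \<gamma>(2) \<delta>le assms(6) by (simp add: psi_exp_single)
  then have "\<gamma> + Poly_Mapping.single 0 (d - \<delta>) \<in> C" using g2Y pa unfolding C_def by simp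
  then have "Poly_Mapping.lookup (\<gamma> + Poly_Mapping.single 0 (d - \<delta>)) 0 \<le> b0" by (rule b0ge)
  then have lo: "d - \<delta> \<le> b0" by (simp add: lookup_add)
  define \<beta>' where "\<beta>' = \<beta> - Poly_Mapping.single 0 b0"
  have \<beta>'Y: "\<beta>' \<in> ymons m" unfolding \<beta>'_def using ymons_minus[OF \<beta>Y] .
  have "\<beta> = \<beta>' + Poly_Mapping.single 0 b0" unfolding \<beta>'_def using split0[of \<beta> 0] \<beta>0 by simp
  then have "psi_exp a \<beta> = psi_exp a \<beta>' + (0, int b0)"
    using psi_exp_add[OF \<beta>'Y ymons_single[of 0 m], where a=a] assms(6) by (simp add: psi_exp_single)
  moreover have "psi_exp a \<beta> = (s, int d)" using \<beta>C pa unfolding C_def by simp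
  moreover have b0d: "b0 \<le> d" using lookup0_le_tdeg[OF \<beta>Y] Ctdeg[OF \<beta>C] \<beta>0 by simp
  ultimately have "psi_exp a \<beta>' = (s, int (d - b0))" by (auto simp: prod_eq_iff)
  then have "(s, int (d - b0)) \<in> S_Mh M" using psi_S_Mh[OF \<beta>'Y ha] by simp
  then have "\<delta> \<le> d - b0" unfolding \<delta>_def deltaA_def by (rule Least_le)
  then have "b0 = d - \<delta>" using lo b0d by simp
  then show ?thesis using nf dy \<delta>le unfolding \<delta>_def s_def d_def by simp
qed

end
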